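(* Let $X=(x_1,\dots,x_t)$ be distinct elements of $[n]$ and let $\mathrm{Shuffle}(\pi,X)$ be the procedure: for $i=t,t-1,\dots,1$, choose $z$ uniformly at random from $[n]\setminus\{x_1,\dots,x_{i-1}\}$ and swap the values $\pi(x_i)$ and $\pi(z)$; output $\pi$. (a) If $\phi:X\to[n]$ is injective and $\pi$ is uniformly random among permutations of $[n]$ with $\pi|_X=\phi$, then $\mathrm{Shuffle}(\pi,X)$ is a uniformly random permutation of $[n]$. (b) Let $E$ be a pattern event with $\mathrm{vbl}(E)=X$ and let $\pi\in E$. If $E'$ is a pattern event with $\pi\notin E'$ and $\mathrm{Shuffle}(\pi,X)\in E'$ with positive probability, then there exist $(x,y)\in P(E)$ and $(x',y')\in P(E')$ with $x=x'$ or $y=y'$.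
   Context: The probability space is the set of permutations of $[n]$ with the uniform measure. A pattern event $E$ is given by a set $P(E)=\{(x_1,y_1),\dots,(x_k,y_k)\}\subseteq[n]\times[n]$ and occurs for $\pi$ iff $\pi(x_j)=y_j$ for all $j$; $\mathrm{vbl}(E)=\{x:\exists y,(x,y)\in P(E)\}$. "Swap the values $\pi(a)$ and $\pi(b)$" means replacing $\pi$ by $\pi\circ\tau_{ab}$ with $\tau_{ab}$ the transposition of $a,b$ (no-op if $a=b$). *)

theory Defs
  imports "HOL-Probability.Probability" "HOL-Combinatorics.Permutations"
begin

text \<open>Permutations of [n] = {1..n} are functions p with p permutes {1..n}.
 A pattern event is represented by its set P of pairs.\<close>

definition pattern_event :: "nat \<Rightarrow> (nat \<times> nat) set \<Rightarrow> bool" where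
  "pattern_event n P \<longleftrightarrow> P \<subseteq> {1..n} \<times> {1..n}"

definition occurs :: "(nat \<times> nat) set \<Rightarrow> (nat \<Rightarrow> nat) \<Rightarrow> bool" where
  "occurs P \<pi> \<longleftrightarrow> (\<forall>(x, y) \<in> P. \<pi> x = y)"

definition vbl :: "(nat \<times> nat) set \<Rightarrow> nat set" where
  "vbl P = {x. \<exists>y. (x, y) \<in> P}"

definition swap_vals :: "(nat \<Rightarrow> nat) \<Rightarrow> nat \<Rightarrow> nat \<Rightarrow> (nat \<Rightarrow> nat)" where
  "swap_vals \<pi> a b = \<pi> \<circ> Transposition.transpose a b"

text \<open>shuffle_from n X i pi performs the steps for indices i, i-1, ..., 1 (1-based),
  where x_(k) = X ! (k-1).\<close>
fun shuffle_from :: "nat \<Rightarrow> nat list \<Rightarrow> nat \<Rightarrow> (nat \<Rightarrow> nat) \<Rightarrow> (nat \<Rightarrow> nat) pmf" where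
  "shuffle_from n X 0 \<pi> = return_pmf \<pi>"
| "shuffle_from n X (Suc i) \<pi> =
     pmf_of_set ({1..n} - set (take i X)) \<bind>
       (\<lambda>z. shuffle_from n X i (swap_vals \<pi> (X ! i) z))"

definition Shuffle :: "nat \<Rightarrow> nat list \<Rightarrow> (nat \<Rightarrow> nat) \<Rightarrow> (nat \<Rightarrow> nat) pmf" where
  "Shuffle n X \<pi> = shuffle_from n X (length X) \<pi>"

end

theory Submission
  imports Defs
begin

lemma pair_pmf_of_set:
  assumes "finite A" "A \<noteq> {}" "finite B" "B \<noteq> {}"
  shows "pair_pmf (pmf_of_set A) (pmf_of_set B) = pmf_of_set (A \<times> B)"
proof (rule pmf_eqI)
  fix p :: "'a \<times> 'b"
  obtain a b where p: "p = (a, b)" by (cases p)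
  show "pmf (pair_pmf (pmf_of_set A) (pmf_of_set B)) p = pmf (pmf_of_set (A \<times> B)) p"
    using assms by (simp add: p pmf_pair indicator_def card_cartesian_product)
qed

lemma step_image:
  fixes n :: nat and X :: "nat list" and \<phi> :: "nat \<Rightarrow> nat" and i :: nat
  assumes dX: "distinct X" and sX: "set X \<subseteq> {1..n}" and il: "i < length X"
    and inj: "inj_on \<phi> (set X)" and img: "\<phi> ` set X \<subseteq> {1..n}"
  defines "A \<equiv> \<lambda>j. {\<pi>. \<pi> permutes {1..n} \<and> (\<forall>x\<in>set (take j X). \<pi> x = \<phi> x)}"
  defines "f \<equiv> \<lambda>(\<pi>, z). swap_vals \<pi> (X ! i) z"
  defines "Z \<equiv> {1..n} - set (take i X)"
  shows "inj_on f (A (Suc i) \<times> Z)" and "f ` (A (Suc i) \<times> Z) = A i"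
proof -
  have xX: "X ! i \<in> set X" using il by simp
  have xn: "X ! i \<notin> set (take i X)"
  proof
    assume "X ! i \<in> set (take i X)"
    then obtain j where j: "j < length (take i X)" "take i X ! j = X ! i" by (auto simp: in_set_conv_nth)
    hence "X ! j = X ! i" "j < i" by auto
    thus False using dX il nth_eq_iff_index_eq[OF dX, of j i] by simp
  qed
  have takeS: "set (take (Suc i) X) = insert (X ! i) (set (take i X))"
    using il by (simp add: take_Suc_conv_app_nth)
  have tsub: "set (take i X) \<subseteq> set X" by (meson set_take_subset)
  show "inj_on f (A (Suc i) \<times> Z)"
  proof (rule inj_onI)
    fix p q
    assume a0: "p \<in> A (Suc i) \<times> Z" "q \<in> A (Suc i) \<times> Z" "f p = f q"
    obtain \<pi> z \<pi>' z' where pq: "p = (\<pi>, z)" "q = (\<pi>', z')" by (cases p, cases q) auto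
    have a: "(\<pi>, z) \<in> A (Suc i) \<times> Z" "(\<pi>', z') \<in> A (Suc i) \<times> Z" "f (\<pi>, z) = f (\<pi>', z')"
      using a0 pq by auto
    have e: "\<pi> \<circ> Transposition.transpose (X ! i) z = \<pi>' \<circ> Transposition.transpose (X ! i) z'"
      using a(3) by (simp add: f_def swap_vals_def)
    have p1: "\<pi> (X ! i) = \<phi> (X ! i)" "\<pi>' (X ! i) = \<phi> (X ! i)"
      using a takeS by (auto simp: A_def)
    have bij': "bij \<pi>'" using a by (auto simp: A_def permutes_bij)
    have "\<pi>' (Transposition.transpose (X ! i) z' z) = \<pi>' (X ! i)"
      using fun_cong[OF e, of z] p1 by simp
    hence "Transposition.transpose (X ! i) z' z = X ! i"
      using bij' by (meson bij_is_inj injD)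
    hence zz: "z = z'" by (auto simp: Transposition.transpose_def split: if_splits)
    have "\<pi> = \<pi>'"
    proof
      fix y
      have "\<pi> (Transposition.transpose (X ! i) z (Transposition.transpose (X ! i) z y))
          = \<pi>' (Transposition.transpose (X ! i) z' (Transposition.transpose (X ! i) z y))"
        using fun_cong[OF e, of "Transposition.transpose (X ! i) z y"] by simp
      thus "\<pi> y = \<pi>' y" using zz by simp
    qed
    thus "p = q" using zz pq by simp
  qed
  show "f ` (A (Suc i) \<times> Z) = A i"
  proof
    show "f ` (A (Suc i) \<times> Z) \<subseteq> A i"
    proof clarify
      fix \<pi> z assume a: "\<pi> \<in> A (Suc i)" "z \<in> Z"
      have p: "\<pi> permutes {1..n}" using a by (simp add: A_def)
      have t: "Transposition.transpose (X ! i) z permutes {1..n}"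
        using a(2) xX sX unfolding Z_def by (intro permutes_swap_id) auto
      have "f (\<pi>, z) permutes {1..n}"
        using permutes_compose[OF t p] by (simp add: f_def swap_vals_def)
      moreover have "\<forall>x\<in>set (take i X). f (\<pi>, z) x = \<phi> x"
      proof
        fix x assume x: "x \<in> set (take i X)"
        have "x \<noteq> X ! i" "x \<noteq> z" using x xn a(2) by (auto simp: Z_def)
        thus "f (\<pi>, z) x = \<phi> x" using a(1) x takeS
          by (auto simp: f_def swap_vals_def A_def Transposition.transpose_def)
      qed
      ultimately show "f (\<pi>, z) \<in> A i" by (simp add: A_def)
    qed
  next
    show "A i \<subseteq> f ` (A (Suc i) \<times> Z)"
    proof
      fix \<sigma> assume s: "\<sigma> \<in> A i"
      have sp: "\<sigma> permutes {1..n}" using s by (simp add: A_def)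
      define z where "z = inv \<sigma> (\<phi> (X ! i))"
      have phin: "\<phi> (X ! i) \<in> {1..n}" using img xX by auto
      have zn: "z \<in> {1..n}" unfolding z_def
        using permutes_in_image[OF permutes_inv[OF sp]] phin by blast
      have sz: "\<sigma> z = \<phi> (X ! i)" unfolding z_def using sp by (simp add: permutes_inverses(1))
      have zt: "z \<notin> set (take i X)"
      proof
        assume zt: "z \<in> set (take i X)"
        hence "\<sigma> z = \<phi> z" using s by (simp add: A_def)
        hence "\<phi> z = \<phi> (X ! i)" using sz by simp
        hence "z = X ! i" using inj zt tsub xX by (meson inj_onD subsetD)
        thus False using zt xn by simp
      qed
      define \<pi> where "\<pi> = \<sigma> \<circ> Transposition.transpose (X ! i) z"
      have t: "Transposition.transpose (X ! i) z permutes {1..n}"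
        using zn xX sX by (intro permutes_swap_id) auto
      have "\<pi> permutes {1..n}" unfolding \<pi>_def using permutes_compose[OF t sp] by simp
      moreover have "\<forall>x\<in>set (take (Suc i) X). \<pi> x = \<phi> x"
      proof
        fix x assume x: "x \<in> set (take (Suc i) X)"
        show "\<pi> x = \<phi> x"
        proof (cases "x = X ! i")
          case True thus ?thesis using sz by (simp add: \<pi>_def)
        next
          case False
          hence "x \<in> set (take i X)" using x takeS by simp
          moreover hence "x \<noteq> z" using zt by auto
          ultimately show ?thesis using False s
            by (simp add: \<pi>_def A_def Transposition.transpose_def)
        qed
      qed
      ultimately have "\<pi> \<in> A (Suc i)" by (simp add: A_def)
      moreover have "z \<in> Z" using zn zt by (simp add: Z_def)
      moreover have "f (\<pi>, z) = \<sigma>"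
        by (rule ext) (simp add: f_def swap_vals_def \<pi>_def)
      ultimately show "\<sigma> \<in> f ` (A (Suc i) \<times> Z)" by force
    qed
  qed
qed


lemma uniform_aux:
  fixes n :: nat and X :: "nat list" and \<phi> :: "nat \<Rightarrow> nat"
  assumes dX: "distinct X" and sX: "set X \<subseteq> {1..n}"
    and inj: "inj_on \<phi> (set X)" and img: "\<phi> ` set X \<subseteq> {1..n}"
  defines "A \<equiv> \<lambda>j. {\<pi>. \<pi> permutes {1..n} \<and> (\<forall>x\<in>set (take j X). \<pi> x = \<phi> x)}"
  shows "i \<le> length X \<Longrightarrow> A i \<noteq> {} \<and> pmf_of_set (A i) \<bind> shuffle_from n X i = pmf_of_set (A 0)"
proof (induction i)
  case 0
  have "id \<in> A 0" by (simp add: A_def permutes_id)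
  thus ?case by (auto simp: bind_return_pmf')
next
  case (Suc i)
  hence il: "i < length X" by simp
  from Suc have IH: "A i \<noteq> {}" "pmf_of_set (A i) \<bind> shuffle_from n X i = pmf_of_set (A 0)" by auto
  define f where "f = (\<lambda>(\<pi>, z). swap_vals \<pi> (X ! i) z)"
  define Z where "Z = {1..n} - set (take i X)"
  have inj': "inj_on f (A (Suc i) \<times> Z)" and im: "f ` (A (Suc i) \<times> Z) = A i"
    using step_image[OF dX sX il inj img] unfolding A_def f_def Z_def by auto
  have finA: "finite (A j)" for j
    by (rule finite_subset[OF _ finite_permutations[of "{1..n}"]]) (auto simp: A_def)
  have finZ: "finite Z" by (simp add: Z_def)
  have AS: "A (Suc i) \<noteq> {}" using IH(1) im by auto
  have "X ! i \<notin> set (take i X)"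
  proof
    assume "X ! i \<in> set (take i X)"
    then obtain j where j: "j < length (take i X)" "take i X ! j = X ! i" by (auto simp: in_set_conv_nth)
    hence "X ! j = X ! i" "j < i" by auto
    thus False using dX il nth_eq_iff_index_eq[OF dX, of j i] by simp
  qed
  moreover have "X ! i \<in> {1..n}" using sX il nth_mem by blast
  ultimately have ZZ: "Z \<noteq> {}" by (auto simp: Z_def)
  have "pmf_of_set (A (Suc i)) \<bind> shuffle_from n X (Suc i)
      = pmf_of_set (A (Suc i)) \<bind> (\<lambda>\<pi>. pmf_of_set Z \<bind> (\<lambda>z. shuffle_from n X i (f (\<pi>, z))))"
    by (intro arg_cong[where f="bind_pmf _"] ext) (simp add: Z_def f_def)
  also have "\<dots> = pair_pmf (pmf_of_set (A (Suc i))) (pmf_of_set Z) \<bind> (\<lambda>p. shuffle_from n X i (f p))"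
    by (simp add: pair_pmf_def bind_assoc_pmf bind_return_pmf)
  also have "\<dots> = map_pmf f (pmf_of_set (A (Suc i) \<times> Z)) \<bind> shuffle_from n X i"
    by (simp add: pair_pmf_of_set[OF finA AS finZ ZZ] bind_map_pmf)
  also have "\<dots> = pmf_of_set (A i) \<bind> shuffle_from n X i"
    using map_pmf_of_set_inj[OF inj'] AS ZZ finA finZ im by simp
  finally have e: "pmf_of_set (A (Suc i)) \<bind> shuffle_from n X (Suc i) = pmf_of_set (A i) \<bind> shuffle_from n X i" .
  show ?case using AS e IH(2) by (intro conjI) (argo, argo)
qed


lemma shuffle_inv:
  fixes n :: nat and X :: "nat list"
  assumes dX: "distinct X" and sX: "set X \<subseteq> {1..n}"
  shows "i \<le> length X \<Longrightarrow> \<sigma> \<in> set_pmf (shuffle_from n X i \<pi>) \<Longrightarrow> x' \<notin> set (take i X) \<Longrightarrow>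
     \<sigma> x' = \<pi> x' \<or> \<sigma> x' \<in> \<pi> ` set (take i X)"
proof (induction i arbitrary: \<pi>)
  case 0
  thus ?case by simp
next
  case (Suc i)
  hence il: "i < length X" by simp
  have xn: "X ! i \<notin> set (take i X)"
  proof
    assume "X ! i \<in> set (take i X)"
    then obtain j where j: "j < length (take i X)" "take i X ! j = X ! i" by (auto simp: in_set_conv_nth)
    hence "X ! j = X ! i" "j < i" by auto
    thus False using dX il nth_eq_iff_index_eq[OF dX, of j i] by simp
  qed
  have xN: "X ! i \<in> {1..n}" using sX il nth_mem by blast
  have takeS: "set (take (Suc i) X) = insert (X ! i) (set (take i X))"
    using il by (simp add: take_Suc_conv_app_nth)
  define Z where "Z = {1..n} - set (take i X)"
  have ZZ: "Z \<noteq> {}" "finite Z" using xn xN by (auto simp: Z_def)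
  have "\<sigma> \<in> set_pmf (pmf_of_set Z \<bind> (\<lambda>z. shuffle_from n X i (swap_vals \<pi> (X ! i) z)))"
    using Suc.prems(2) by (simp add: Z_def)
  then obtain z where z: "z \<in> Z"
    and s: "\<sigma> \<in> set_pmf (shuffle_from n X i (swap_vals \<pi> (X ! i) z))"
    using ZZ by (auto simp: set_bind_pmf)
  define \<pi>1 where "\<pi>1 = swap_vals \<pi> (X ! i) z"
  have x'i: "x' \<notin> set (take i X)" "x' \<noteq> X ! i" using Suc.prems(3) takeS by auto
  have IH: "\<sigma> x' = \<pi>1 x' \<or> \<sigma> x' \<in> \<pi>1 ` set (take i X)"
    using Suc.IH[of \<pi>1] il s x'i by (simp add: \<pi>1_def)
  have eq: "\<pi>1 y = \<pi> y" if "y \<in> set (take i X)" for y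
    using that xn z by (auto simp: \<pi>1_def swap_vals_def Z_def Transposition.transpose_def)
  hence "\<pi>1 ` set (take i X) = \<pi> ` set (take i X)" by (auto simp: image_def)
  moreover have "\<pi>1 x' = \<pi> x' \<or> \<pi>1 x' = \<pi> (X ! i)"
    using x'i by (auto simp: \<pi>1_def swap_vals_def Transposition.transpose_def)
  ultimately show ?case using IH takeS by auto
qed

theorem mainTheorem13:
  fixes n :: nat and X :: "nat list"
  assumes "distinct X" and "set X \<subseteq> {1..n}"
  shows "(\<forall>\<phi> :: nat \<Rightarrow> nat. inj_on \<phi> (set X) \<and> \<phi> ` set X \<subseteq> {1..n} \<longrightarrow>
            pmf_of_set {\<pi>. \<pi> permutes {1..n} \<and> (\<forall>x \<in> set X. \<pi> x = \<phi> x)} \<bind> Shuffle n X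
            = pmf_of_set {\<pi>. \<pi> permutes {1..n}})
       \<and> (\<forall>P \<pi> P'. pattern_event n P \<and> vbl P = set X \<and> \<pi> permutes {1..n} \<and> occurs P \<pi> \<and>
            pattern_event n P' \<and> \<not> occurs P' \<pi> \<and>
            measure_pmf.prob (Shuffle n X \<pi>) {\<sigma>. occurs P' \<sigma>} > 0 \<longrightarrow>
            (\<exists>(x, y) \<in> P. \<exists>(x', y') \<in> P'. x = x' \<or> y = y'))"
proof (intro conjI allI impI)
  fix \<phi> :: "nat \<Rightarrow> nat"
  assume h: "inj_on \<phi> (set X) \<and> \<phi> ` set X \<subseteq> {1..n}"
  have "pmf_of_set {\<pi>. \<pi> permutes {1..n} \<and> (\<forall>x\<in>set (take (length X) X). \<pi> x = \<phi> x)} \<bind> shuffle_from n X (length X)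
     = pmf_of_set {\<pi>. \<pi> permutes {1..n} \<and> (\<forall>x\<in>set (take 0 X). \<pi> x = \<phi> x)}"
    using uniform_aux[OF assms, of \<phi> "length X"] h by blast
  thus "pmf_of_set {\<pi>. \<pi> permutes {1..n} \<and> (\<forall>x \<in> set X. \<pi> x = \<phi> x)} \<bind> Shuffle n X
            = pmf_of_set {\<pi>. \<pi> permutes {1..n}}"
    by (simp add: Shuffle_def[abs_def])
next
  fix P \<pi> P'
  assume h: "pattern_event n P \<and> vbl P = set X \<and> \<pi> permutes {1..n} \<and> occurs P \<pi> \<and>
            pattern_event n P' \<and> \<not> occurs P' \<pi> \<and>
            measure_pmf.prob (Shuffle n X \<pi>) {\<sigma>. occurs P' \<sigma>} > 0"
  hence "measure_pmf.prob (Shuffle n X \<pi>) {\<sigma>. occurs P' \<sigma>} \<noteq> 0" by simp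
  then obtain \<sigma> where s: "\<sigma> \<in> set_pmf (Shuffle n X \<pi>)" "occurs P' \<sigma>"
    by (auto simp: measure_pmf_zero_iff)
  from h obtain x' y' where p': "(x', y') \<in> P'" "\<pi> x' \<noteq> y'" by (auto simp: occurs_def)
  have sx: "\<sigma> x' = y'" using s(2) p'(1) by (auto simp: occurs_def)
  show "\<exists>(x, y) \<in> P. \<exists>(x', y') \<in> P'. x = x' \<or> y = y'"
  proof (cases "x' \<in> set X")
    case True
    then obtain y where "(x', y) \<in> P" using h by (auto simp: vbl_def)
    thus ?thesis using p'(1) by blast
  next
    case False
    have "\<sigma> x' = \<pi> x' \<or> \<sigma> x' \<in> \<pi> ` set (take (length X) X)"
      using shuffle_inv[OF assms, of "length X" \<sigma> \<pi> x'] s(1) False by (simp add: Shuffle_def)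
    hence "y' \<in> \<pi> ` set X" using sx p'(2) by simp
    then obtain x where x: "x \<in> set X" "y' = \<pi> x" by auto
    then obtain y where xy: "(x, y) \<in> P" using h by (auto simp: vbl_def)
    hence "\<pi> x = y" using h by (auto simp: occurs_def)
    thus ?thesis using xy x p'(1) by blast
  qed
qed

end
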